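(* Let $k\in\mathbb{R}$, let $\upsilon$ be a multiplier system of weight $k$, and suppose $V$ is a finite-dimensional subspace of the space of moderate-growth holomorphic functions on $\mathbb{H}$ which is invariant under the action $f\mapsto f|_k^\upsilon\gamma$ of $\Gamma$. If $\{f_1,\dots,f_n\}$ is a spanning set for $V$, then there is a representation $\rho:\Gamma\to GL_n(\mathbb{C})$ such that $F=(f_1,\dots,f_n)^t$ satisfies $F|_k^\upsilon\gamma=\rho(\gamma)F$ for all $\gamma\in\Gamma$, i.e. $F\in\mathcal{H}(k,\rho,\upsilon)$.
   Context: $\Gamma=SL(2,\mathbb{Z})$ acts on the upper half-plane $\mathbb{H}$ by Möbius transformations. Complex powers use the principal branch of $\log$. A multiplier system of weight $k$ is a map $\upsilon:\Gamma\to\{|w|=1\}$ such that $\nu(\gamma,z)=\upsilon(\gamma)(cz+d)^k$ ($\gamma=\begin{pmatrix}a&b\\c&d\end{pmatrix}$) satisfies $\nu(\gamma\sigma,z)=\nu(\gamma,\sigma z)\nu(\sigma,z)$. Slash: $(f|_k^\upsilon\gamma)(z)=\upsilon(\gamma)^{-1}(cz+d)^{-k}f(\gamma z)$, applied componentwise to vectors. Moderate growth: $|f(x+iy)|\le y^N$ for $y>c$, some $N,c>0$. $\mathcal{H}(k,\rho,\upsilon)$: column vectors of holomorphic moderate-growth functions $F$ with $F|_k^\upsilon\gamma=\rho(\gamma)F$ for all $\gamma$. *)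

theory Defs
  imports "HOL-Analysis.Analysis"
begin

text \<open>Elements of SL(2,Z) are encoded as quadruples (a,b,c,d) standing for the
  matrix with rows (a b) and (c d).\<close>
type_synonym sl2 = "int \<times> int \<times> int \<times> int"

definition SL2Z :: "sl2 set" where
  "SL2Z = {(a,b,c,d). a * d - b * c = 1}"

fun sl2_mult :: "sl2 \<Rightarrow> sl2 \<Rightarrow> sl2" where
  "sl2_mult (a,b,c,d) (a',b',c',d') =
     (a*a' + b*c', a*b' + b*d', c*a' + d*c', c*b' + d*d')"

definition upper_half_plane :: "complex set" where
  "upper_half_plane = {z. Im z > 0}"

fun moebius :: "sl2 \<Rightarrow> complex \<Rightarrow> complex" where
  "moebius (a,b,c,d) z = (of_int a * z + of_int b) / (of_int c * z + of_int d)"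

text \<open>The automorphy factor (cz+d)^s, principal branch (complex powr uses the principal Ln).\<close>
fun aut_pow :: "sl2 \<Rightarrow> complex \<Rightarrow> real \<Rightarrow> complex" where
  "aut_pow (a,b,c,d) z s = (of_int c * z + of_int d) powr (complex_of_real s)"

definition multiplier_system :: "real \<Rightarrow> (sl2 \<Rightarrow> complex) \<Rightarrow> bool" where
  "multiplier_system k v \<longleftrightarrow>
     (\<forall>g\<in>SL2Z. cmod (v g) = 1) \<and>
     (\<forall>g\<in>SL2Z. \<forall>s\<in>SL2Z. \<forall>z\<in>upper_half_plane.
        v (sl2_mult g s) * aut_pow (sl2_mult g s) z k =
        (v g * aut_pow g (moebius s z) k) * (v s * aut_pow s z k))"

definition slash :: "real \<Rightarrow> (sl2 \<Rightarrow> complex) \<Rightarrow> (complex \<Rightarrow> complex) \<Rightarrow> sl2 \<Rightarrow> complex \<Rightarrow> complex" where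
  "slash k v f g z = inverse (v g) * aut_pow g z (- k) * f (moebius g z)"

definition moderate_growth :: "(complex \<Rightarrow> complex) \<Rightarrow> bool" where
  "moderate_growth f \<longleftrightarrow>
     (\<exists>N c. N > 0 \<and> c > 0 \<and> (\<forall>x y. y > c \<longrightarrow> cmod (f (Complex x y)) \<le> y powr N))"

definition representation :: "(sl2 \<Rightarrow> complex ^'n ^'n) \<Rightarrow> bool" where
  "representation \<rho> \<longleftrightarrow>
     (\<forall>g\<in>SL2Z. invertible (\<rho> g)) \<and>
     (\<forall>g\<in>SL2Z. \<forall>s\<in>SL2Z. \<rho> (sl2_mult g s) = \<rho> g ** \<rho> s)"

definition HH :: "real \<Rightarrow> (sl2 \<Rightarrow> complex ^'n ^'n) \<Rightarrow> (sl2 \<Rightarrow> complex) \<Rightarrow> (complex \<Rightarrow> complex ^'n) set" where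
  "HH k \<rho> v = {F. (\<forall>i. (\<lambda>z. F z $ i) holomorphic_on upper_half_plane \<and> moderate_growth (\<lambda>z. F z $ i)) \<and>
       (\<forall>g\<in>SL2Z. \<forall>z\<in>upper_half_plane.
          (\<chi> i. slash k v (\<lambda>w. F w $ i) g z) = \<rho> g *v F z)}"

end

theory Submission imports Defs begin

abbreviation "HP \<equiv> upper_half_plane"

lemma SL2Z_iff: "(a,b,c,d) \<in> SL2Z \<longleftrightarrow> a*d - b*c = 1" by (simp add: SL2Z_def)

lemma denom_nz:
  assumes "(a,b,c,d) \<in> SL2Z" "z \<in> HP" shows "of_int c * z + of_int d \<noteq> 0"
proof
  assume h: "of_int c * z + of_int d = 0"
  have "Im (of_int c * z + of_int d) = of_int c * Im z" by simp
  with h have "c = 0" using assms(2) by (simp add: upper_half_plane_def)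
  with h have "d = 0" by simp
  with \<open>c = 0\<close> assms(1) show False by (simp add: SL2Z_def)
qed

lemma moebius_H:
  assumes "g \<in> SL2Z" "z \<in> HP" shows "moebius g z \<in> HP"
proof -
  obtain a b c d where g: "g = (a,b,c,d)" by (cases g) auto
  have det: "real_of_int a * real_of_int d - real_of_int b * real_of_int c = 1"
    using assms(1) g by (simp add: SL2Z_def) (metis of_int_1 of_int_diff of_int_mult)
  have nz: "of_int c * z + of_int d \<noteq> 0" using denom_nz assms g by simp
  hence pos: "(Re (of_int c * z + of_int d))\<^sup>2 + (Im (of_int c * z + of_int d))\<^sup>2 > 0"
    by (simp add: complex_eq_iff sum_power2_gt_zero_iff)
  have "Im (of_int a * z + of_int b) * Re (of_int c * z + of_int d) - Re (of_int a * z + of_int b) * Im (of_int c * z + of_int d)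
        = (real_of_int a * real_of_int d - real_of_int b * real_of_int c) * Im z"
    by (simp add: algebra_simps)
  also have "\<dots> = Im z" using det by simp
  finally have "Im (moebius g z) = Im z / ((Re (of_int c * z + of_int d))\<^sup>2 + (Im (of_int c * z + of_int d))\<^sup>2)"
    by (simp add: g Im_divide)
  thus ?thesis using pos assms(2) by (simp add: upper_half_plane_def)
qed

lemma moebius_mult:
  assumes "s \<in> SL2Z" "z \<in> HP" shows "moebius (sl2_mult g s) z = moebius g (moebius s z)"
proof -
  obtain a b c d where g: "g = (a,b,c,d)" by (cases g) auto
  obtain a' b' c' d' where s: "s = (a',b',c',d')" by (cases s) auto
  define D where "D = of_int c' * z + of_int d'"
  define P where "P = of_int a' * z + of_int b'"
  have nz: "D \<noteq> 0" using denom_nz assms s by (simp add: D_def)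
  have 1: "of_int a * P / D + of_int b = (of_int a * P + of_int b * D) / D" using nz by (simp add: field_simps)
  have 2: "of_int c * P / D + of_int d = (of_int c * P + of_int d * D) / D" using nz by (simp add: field_simps)
  have "moebius g (moebius s z) = (of_int a * P + of_int b * D) / (of_int c * P + of_int d * D)"
    using nz by (simp add: g s P_def[symmetric] D_def[symmetric] 1 2)
  also have "\<dots> = moebius (sl2_mult g s) z"
    by (simp add: g s P_def D_def algebra_simps)
  finally show ?thesis by simp
qed

lemma aut_pow_neg: "aut_pow g z (-k) = inverse (aut_pow g z k)"
  by (cases g) (simp add: powr_def exp_minus)

lemma sl2_mult_SL2Z: "g \<in> SL2Z \<Longrightarrow> s \<in> SL2Z \<Longrightarrow> sl2_mult g s \<in> SL2Z"
proof -
  assume g0: "g \<in> SL2Z" and s0: "s \<in> SL2Z"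
  obtain a b c d where g: "g = (a,b,c,d)" by (cases g) auto
  obtain a' b' c' d' where s: "s = (a',b',c',d')" by (cases s) auto
  have "(a*a' + b*c') * (c*b' + d*d') - (a*b' + b*d') * (c*a' + d*c') = (a*d - b*c) * (a'*d' - b'*c')"
    by (simp add: algebra_simps)
  also have "\<dots> = 1" using g0 s0 g s by (simp add: SL2Z_def)
  finally show ?thesis by (simp add: g s SL2Z_def)
qed

lemma slash_mult:
  assumes m: "multiplier_system k v" and "g \<in> SL2Z" "s \<in> SL2Z" "z \<in> HP"
  shows "slash k v (slash k v f g) s z = slash k v f (sl2_mult g s) z"
proof -
  have coc: "v (sl2_mult g s) * aut_pow (sl2_mult g s) z k =
        (v g * aut_pow g (moebius s z) k) * (v s * aut_pow s z k)"
    using m assms unfolding multiplier_system_def by blast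
  have "inverse (v (sl2_mult g s)) * inverse (aut_pow (sl2_mult g s) z k)
      = inverse ((v g * aut_pow g (moebius s z) k) * (v s * aut_pow s z k))"
    by (simp only: coc[symmetric] inverse_mult_distrib)
  also have "\<dots> = inverse (v s) * inverse (aut_pow s z k) * (inverse (v g) * inverse (aut_pow g (moebius s z) k))"
    by (simp add: inverse_mult_distrib mult_ac)
  finally have e: "inverse (v (sl2_mult g s)) * inverse (aut_pow (sl2_mult g s) z k)
      = inverse (v s) * inverse (aut_pow s z k) * (inverse (v g) * inverse (aut_pow g (moebius s z) k))" .
  show ?thesis unfolding slash_def aut_pow_neg moebius_mult[OF assms(3,4)]
    using e by (simp add: mult.assoc)
qed

lemma slash_cong:
  assumes "\<forall>w\<in>HP. f w = h w" "g \<in> SL2Z" "z \<in> HP"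
  shows "slash k v f g z = slash k v h g z"
  using assms moebius_H by (simp add: slash_def)

lemma slash_sum: "slash k v (\<lambda>z. \<Sum>i\<in>I. c i * f i z) g z = (\<Sum>i\<in>I. c i * slash k v (f i) g z)"
  by (simp add: slash_def sum_distrib_left mult_ac)

lemma one_SL2Z: "(1,0,0,1) \<in> SL2Z" by (simp add: SL2Z_def)

lemma i_HP: "\<i> \<in> HP" by (simp add: upper_half_plane_def)

lemma slash_id:
  assumes m: "multiplier_system k v" and "z \<in> HP"
  shows "slash k v f (1,0,0,1) z = f z"
proof -
  have a1: "\<And>w. aut_pow (1,0,0,1) w k = 1" by (simp add: powr_def)
  have h: "v (sl2_mult (1,0,0,1) (1,0,0,1)) * aut_pow (sl2_mult (1,0,0,1) (1,0,0,1)) \<i> k =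
        (v (1,0,0,1) * aut_pow (1,0,0,1) (moebius (1,0,0,1) \<i>) k) * (v (1,0,0,1) * aut_pow (1,0,0,1) \<i> k)"
    using m one_SL2Z i_HP unfolding multiplier_system_def by blast
  hence "v (1,0,0,1) = v (1,0,0,1) * v (1,0,0,1)" by (simp only: a1 sl2_mult.simps) simp
  moreover have "v (1,0,0,1) \<noteq> 0" using m one_SL2Z unfolding multiplier_system_def by force
  ultimately have "v (1,0,0,1) = 1" by simp
  thus ?thesis by (simp add: slash_def powr_def)
qed

lemma inv_SL2Z:
  assumes "(a,b,c,d) \<in> SL2Z"
  shows "(d,-b,-c,a) \<in> SL2Z" "sl2_mult (a,b,c,d) (d,-b,-c,a) = (1,0,0,1)"
        "sl2_mult (d,-b,-c,a) (a,b,c,d) = (1,0,0,1)"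
  using assms by (auto simp: SL2Z_def algebra_simps)

lemma rep_comb:
  fixes f :: "'n \<Rightarrow> complex \<Rightarrow> complex"
  assumes "\<forall>i\<in>I. \<forall>z\<in>HP. g i z = (\<Sum>l\<in>B. a i l * f l z)"
  shows "\<forall>z\<in>HP. (\<Sum>i\<in>I. c i * g i z) = (\<Sum>l\<in>B. (\<Sum>i\<in>I. c i * a i l) * f l z)"
proof
  fix z assume z: "z \<in> HP"
  have "(\<Sum>i\<in>I. c i * g i z) = (\<Sum>i\<in>I. \<Sum>l\<in>B. c i * (a i l * f l z))"
    using assms z by (simp add: sum_distrib_left)
  also have "\<dots> = (\<Sum>l\<in>B. \<Sum>i\<in>I. c i * (a i l * f l z))" by (rule sum.swap)
  also have "\<dots> = (\<Sum>l\<in>B. (\<Sum>i\<in>I. c i * a i l) * f l z)"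
    by (simp add: sum_distrib_right mult.assoc)
  finally show "(\<Sum>i\<in>I. c i * g i z) = (\<Sum>l\<in>B. (\<Sum>i\<in>I. c i * a i l) * f l z)" .
qed

lemma sum_UNIV_if:
  "(\<Sum>l\<in>(UNIV::'n::finite set). (if l\<in>B then x l else 0) * y l) = (\<Sum>l\<in>B. x l * (y l::complex))"
proof -
  have "(\<Sum>l\<in>(UNIV::'n set). (if l\<in>B then x l else 0) * y l) = (\<Sum>l\<in>UNIV. if l\<in>B then x l * y l else 0)"
    by (rule sum.cong) auto
  also have "\<dots> = sum (\<lambda>l. x l * y l) (UNIV \<inter> B)" by (rule sum.inter_restrict[symmetric]) simp
  finally show ?thesis by simp
qed

lemma sum_delta_mult: "finite B \<Longrightarrow> j \<in> B \<Longrightarrow> (\<Sum>l\<in>B. (if j = l then 1 else 0) * (y l::complex)) = y j"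
proof -
  assume "finite B" "j \<in> B"
  have "(\<Sum>l\<in>B. (if j = l then 1 else 0) * y l) = (\<Sum>l\<in>B. if j = l then y l else 0)"
    by (rule sum.cong) auto
  thus ?thesis using \<open>finite B\<close> \<open>j \<in> B\<close> by simp
qed

lemma mm_rdistrib: "((A::'a::ring_1^'n^'m) + B) ** C = A ** C + B ** C"
  unfolding matrix_matrix_mult_def by (simp add: vec_eq_iff sum.distrib distrib_right)
lemma mm_rdiff: "((A::'a::ring_1^'n^'m) - B) ** C = A ** C - B ** C"
  unfolding matrix_matrix_mult_def by (rule vec_eq_iff[THEN iffD2]) (simp add: vec_eq_iff sum_subtractf[symmetric] left_diff_distrib)
lemma mm_ldiff: "(A::'a::ring_1^'n^'m) ** (B - C) = A ** B - A ** C"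
  unfolding matrix_matrix_mult_def by (rule vec_eq_iff[THEN iffD2]) (simp add: vec_eq_iff sum_subtractf[symmetric] right_diff_distrib)

lemma mult_B:
  fixes X Y :: "'n::finite \<Rightarrow> 'n \<Rightarrow> complex"
  shows "(((\<chi> j l. if l\<in>B then X j l else 0) :: complex^'n^'n) ** (\<chi> l m. if m\<in>B then Y l m else 0)) $ j $ m
     = (if m\<in>B then (\<Sum>l\<in>B. X j l * Y l m) else 0)"
  by (simp add: matrix_matrix_mult_def sum_UNIV_if)

lemma sum_delta_mult2: "finite B \<Longrightarrow> m \<in> B \<Longrightarrow> (\<Sum>l\<in>B. (x l::complex) * (if l = m then 1 else 0)) = x m"
proof -
  assume "finite B" "m \<in> B"
  have "(\<Sum>l\<in>B. x l * (if l = m then 1 else 0)) = (\<Sum>l\<in>B. if l = m then x l else 0)"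
    by (rule sum.cong) auto
  thus ?thesis using \<open>finite B\<close> \<open>m \<in> B\<close> by simp
qed

theorem proposition2p14:
  fixes k :: real and v :: "sl2 \<Rightarrow> complex"
    and V :: "(complex \<Rightarrow> complex) set"
    and f :: "'n::finite \<Rightarrow> complex \<Rightarrow> complex"
  assumes mult: "multiplier_system k v"
    and V_zero: "(\<lambda>z. 0) \<in> V"
    and V_add: "\<And>g h. g \<in> V \<Longrightarrow> h \<in> V \<Longrightarrow> (\<lambda>z. g z + h z) \<in> V"
    and V_scale: "\<And>c g. g \<in> V \<Longrightarrow> (\<lambda>z. c * g z) \<in> V"
    and V_holo: "\<And>g. g \<in> V \<Longrightarrow> g holomorphic_on upper_half_plane \<and> moderate_growth g"
    and V_inv: "\<And>g \<gamma>. g \<in> V \<Longrightarrow> \<gamma> \<in> SL2Z \<Longrightarrow>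
                   \<exists>h\<in>V. \<forall>z\<in>upper_half_plane. slash k v g \<gamma> z = h z"
    and f_in: "\<And>i. f i \<in> V"
    and f_span: "\<And>g. g \<in> V \<Longrightarrow>
                   \<exists>c :: 'n \<Rightarrow> complex. \<forall>z\<in>upper_half_plane. g z = (\<Sum>i\<in>UNIV. c i * f i z)"
  shows "\<exists>\<rho> :: sl2 \<Rightarrow> complex ^'n ^'n.
           representation \<rho> \<and>
           (\<forall>\<gamma>\<in>SL2Z. \<forall>z\<in>upper_half_plane.
              (\<chi> i. slash k v (f i) \<gamma> z) = \<rho> \<gamma> *v (\<chi> i. f i z)) \<and>
           (\<lambda>z. \<chi> i. f i z) \<in> HH k \<rho> v"
proof -
  define indep where "indep B \<longleftrightarrow> (\<forall>c. (\<forall>z\<in>HP. (\<Sum>l\<in>B. c l * f l z) = 0) \<longrightarrow> (\<forall>l\<in>B. c l = 0))"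
    for B :: "'n set"
  define Is where "Is = card ` {B. indep B}"
  have "finite Is" unfolding Is_def by simp
  moreover have "card {} \<in> Is" unfolding Is_def indep_def by auto
  ultimately have "Max Is \<in> Is" by (intro Max_in) auto
  then obtain B where B: "indep B" and cB: "card B = Max Is" unfolding Is_def by auto
  have Bmax: "card B' \<le> card B" if "indep B'" for B'
    using that cB \<open>finite Is\<close> unfolding Is_def by (simp add: Max_ge)
  have indepD: "\<forall>l\<in>B'. c l = 0" if "indep B'" "\<forall>z\<in>HP. (\<Sum>l\<in>B'. c l * f l z) = 0" for B' c
    using that unfolding indep_def by blast
  have uniq: "\<forall>l\<in>B. c l = d l"
    if "\<forall>z\<in>HP. g z = (\<Sum>l\<in>B. c l * f l z)" "\<forall>z\<in>HP. g z = (\<Sum>l\<in>B. d l * f l z)" for c d g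
  proof -
    have "\<forall>z\<in>HP. (\<Sum>l\<in>B. (c l - d l) * f l z) = 0"
      using that by (simp add: left_diff_distrib sum_subtractf)
    with B have "\<forall>l\<in>B. c l - d l = 0" by (rule indepD)
    thus ?thesis by simp
  qed
  have delta: "\<forall>z. f j z = (\<Sum>l\<in>B. (if j = l then 1 else 0) * f l z)" if "j \<in> B" for j
    using that by (simp add: sum_delta_mult)
  have repf: "\<exists>a. \<forall>z\<in>HP. f j z = (\<Sum>l\<in>B. a l * f l z)" for j
  proof (cases "j \<in> B")
    case True
    show ?thesis by (rule exI[of _ "\<lambda>l. if j = l then 1 else 0"]) (use delta[OF True] in blast)
  next
    case False
    have "card (insert j B) > card B" using False by simp
    have ni: "\<not> indep (insert j B)"
    proof
      assume "indep (insert j B)"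
      hence "card (insert j B) \<le> card B" by (rule Bmax)
      with \<open>card (insert j B) > card B\<close> show False by simp
    qed
    from ni obtain c where c0: "\<forall>z\<in>HP. (\<Sum>l\<in>insert j B. c l * f l z) = 0"
      and cnz: "\<exists>l\<in>insert j B. c l \<noteq> 0" unfolding indep_def by blast
    have c1: "\<forall>z\<in>HP. c j * f j z + (\<Sum>l\<in>B. c l * f l z) = 0" using c0 False by simp
    have "c j \<noteq> 0"
    proof
      assume "c j = 0"
      with c1 have "\<forall>z\<in>HP. (\<Sum>l\<in>B. c l * f l z) = 0" by simp
      with B have "\<forall>l\<in>B. c l = 0" by (rule indepD)
      with cnz \<open>c j = 0\<close> show False by auto
    qed
    have "\<forall>z\<in>HP. f j z = (\<Sum>l\<in>B. (- c l / c j) * f l z)"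
    proof
      fix z assume "z \<in> HP"
      with c1 have "c j * f j z = - (\<Sum>l\<in>B. c l * f l z)"
        by (simp add: eq_neg_iff_add_eq_0)
      hence "f j z = - (\<Sum>l\<in>B. c l * f l z) / c j" using \<open>c j \<noteq> 0\<close>
        using \<open>c j \<noteq> 0\<close> by (metis nonzero_mult_div_cancel_left)
      also have "\<dots> = (\<Sum>l\<in>B. - (c l * f l z)) / c j" by (simp add: sum_negf)
      also have "\<dots> = (\<Sum>l\<in>B. (- c l / c j) * f l z)" by (simp add: sum_divide_distrib)
      finally show "f j z = (\<Sum>l\<in>B. (- c l / c j) * f l z)" .
    qed
    thus ?thesis by (rule exI[of _ "\<lambda>l. - c l / c j"])
  qed
  hence "\<forall>j. \<exists>a. \<forall>z\<in>HP. f j z = (\<Sum>l\<in>B. a l * f l z)" by blast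
  from choice[OF this] obtain a where a: "\<And>j. \<forall>z\<in>HP. f j z = (\<Sum>l\<in>B. a j l * f l z)"
    by blast
  have a_diag: "a j l = (if j = l then 1 else 0)" if "j \<in> B" "l \<in> B" for j l
    using uniq[OF a[of j], of "\<lambda>l. if j = l then 1 else 0"] delta[OF that(1)] that(2) by auto
  have span: "\<exists>c. \<forall>z\<in>HP. g z = (\<Sum>l\<in>B. c l * f l z)" if gV: "g \<in> V" for g
  proof -
    obtain c where c: "\<forall>z\<in>HP. g z = (\<Sum>i\<in>UNIV. c i * f i z)" using f_span[OF gV] by blast
    have "\<forall>z\<in>HP. (\<Sum>i\<in>UNIV. c i * f i z) = (\<Sum>l\<in>B. (\<Sum>i\<in>UNIV. c i * a i l) * f l z)"
      by (rule rep_comb) (use a in blast)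
    with c show ?thesis by (intro exI[of _ "\<lambda>l. \<Sum>i\<in>UNIV. c i * a i l"]) auto
  qed
  have slrep: "\<exists>c. \<gamma> \<in> SL2Z \<longrightarrow> (\<forall>z\<in>HP. slash k v (f j) \<gamma> z = (\<Sum>l\<in>B. c l * f l z))" for \<gamma> j
  proof (cases "\<gamma> \<in> SL2Z")
    case True
    then obtain h where "h \<in> V" and h: "\<forall>z\<in>HP. slash k v (f j) \<gamma> z = h z" using V_inv f_in by blast
    then obtain c where c: "\<forall>z\<in>HP. h z = (\<Sum>l\<in>B. c l * f l z)" using span by blast
    show ?thesis by (rule exI[of _ c]) (use h c in auto)
  qed simp
  have "\<forall>\<gamma>. \<exists>Sg. \<forall>j. \<gamma> \<in> SL2Z \<longrightarrow> (\<forall>z\<in>HP. slash k v (f j) \<gamma> z = (\<Sum>l\<in>B. Sg j l * f l z))"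
  proof
    fix \<gamma>
    have "\<forall>j. \<exists>c. \<gamma> \<in> SL2Z \<longrightarrow> (\<forall>z\<in>HP. slash k v (f j) \<gamma> z = (\<Sum>l\<in>B. c l * f l z))"
      using slrep by blast
    from choice[OF this]
    show "\<exists>Sg. \<forall>j. \<gamma> \<in> SL2Z \<longrightarrow> (\<forall>z\<in>HP. slash k v (f j) \<gamma> z = (\<Sum>l\<in>B. Sg j l * f l z))" .
  qed
  from choice[OF this] obtain S where
    S: "\<And>\<gamma> j. \<gamma> \<in> SL2Z \<Longrightarrow> \<forall>z\<in>HP. slash k v (f j) \<gamma> z = (\<Sum>l\<in>B. S \<gamma> j l * f l z)"
    by blast
  have fB: "finite B" by simp
  have MNu: "S s j m = (\<Sum>l\<in>B. a j l * S s l m)" if "s \<in> SL2Z" "m \<in> B" for s j m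
  proof -
    have "\<forall>z\<in>HP. slash k v (f j) s z = (\<Sum>l\<in>B. a j l * slash k v (f l) s z)"
    proof
      fix z assume z: "z \<in> HP"
      have "slash k v (f j) s z = slash k v (\<lambda>w. \<Sum>l\<in>B. a j l * f l w) s z"
        by (rule slash_cong) (use a that z in auto)
      also have "\<dots> = (\<Sum>l\<in>B. a j l * slash k v (f l) s z)" by (rule slash_sum)
      finally show "slash k v (f j) s z = (\<Sum>l\<in>B. a j l * slash k v (f l) s z)" .
    qed
    moreover have "\<forall>z\<in>HP. (\<Sum>l\<in>B. a j l * slash k v (f l) s z) = (\<Sum>m\<in>B. (\<Sum>l\<in>B. a j l * S s l m) * f m z)"
      by (rule rep_comb) (use S[OF that(1)] in blast)
    ultimately have "\<forall>z\<in>HP. slash k v (f j) s z = (\<Sum>m\<in>B. (\<Sum>l\<in>B. a j l * S s l m) * f m z)" by simp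
    from uniq[OF S[OF that(1), of j] this] that(2) show ?thesis by blast
  qed
  have NNu: "S (sl2_mult g s) j m = (\<Sum>l\<in>B. S g j l * S s l m)" if "g \<in> SL2Z" "s \<in> SL2Z" "m \<in> B" for g s j m
  proof -
    have gs: "sl2_mult g s \<in> SL2Z" using that sl2_mult_SL2Z by blast
    have "\<forall>z\<in>HP. slash k v (f j) (sl2_mult g s) z = (\<Sum>l\<in>B. S g j l * slash k v (f l) s z)"
    proof
      fix z assume z: "z \<in> HP"
      have "slash k v (f j) (sl2_mult g s) z = slash k v (slash k v (f j) g) s z"
        using slash_mult[OF mult that(1,2) z] by simp
      also have "\<dots> = slash k v (\<lambda>w. \<Sum>l\<in>B. S g j l * f l w) s z"
        by (rule slash_cong) (use S[OF that(1)] that z in auto)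
      also have "\<dots> = (\<Sum>l\<in>B. S g j l * slash k v (f l) s z)" by (rule slash_sum)
      finally show "slash k v (f j) (sl2_mult g s) z = (\<Sum>l\<in>B. S g j l * slash k v (f l) s z)" .
    qed
    moreover have "\<forall>z\<in>HP. (\<Sum>l\<in>B. S g j l * slash k v (f l) s z) = (\<Sum>m\<in>B. (\<Sum>l\<in>B. S g j l * S s l m) * f m z)"
      by (rule rep_comb) (use S[OF that(2)] in blast)
    ultimately have "\<forall>z\<in>HP. slash k v (f j) (sl2_mult g s) z = (\<Sum>m\<in>B. (\<Sum>l\<in>B. S g j l * S s l m) * f m z)" by simp
    from uniq[OF S[OF gs, of j] this] that(3) show ?thesis by blast
  qed
  have NIu: "S (1,0,0,1) j m = a j m" if "m \<in> B" for j m
  proof -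
    have "\<forall>z\<in>HP. f j z = (\<Sum>l\<in>B. S (1,0,0,1) j l * f l z)"
      using S[OF one_SL2Z, of j] slash_id[OF mult] by simp
    from uniq[OF this a[of j]] that show ?thesis by blast
  qed
  define M :: "complex^'n^'n" where "M = (\<chi> j m. if m \<in> B then a j m else 0)"
  define N :: "sl2 \<Rightarrow> complex^'n^'n" where "N g = (\<chi> j m. if m \<in> B then S g j m else 0)" for g
  define \<rho> where "\<rho> g = N g + mat 1 - M" for g
  have MM: "M ** M = M"
    unfolding vec_eq_iff M_def
    by (auto simp: mult_B a_diag sum_delta_mult2 cong: sum.cong)
  have NM: "N g ** M = N g" for g
    unfolding vec_eq_iff M_def N_def
    by (auto simp: mult_B a_diag sum_delta_mult2 cong: sum.cong)
  have MN: "M ** N s = N s" if "s \<in> SL2Z" for s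
    unfolding vec_eq_iff M_def N_def
    using MNu[OF that] by (auto simp: mult_B)
  have NN: "N g ** N s = N (sl2_mult g s)" if "g \<in> SL2Z" "s \<in> SL2Z" for g s
    unfolding vec_eq_iff N_def
    using NNu[OF that] by (auto simp: mult_B)
  have NI: "N (1,0,0,1) = M"
    unfolding vec_eq_iff N_def M_def using NIu by auto
  have rho_mult: "\<rho> (sl2_mult g s) = \<rho> g ** \<rho> s" if "g \<in> SL2Z" "s \<in> SL2Z" for g s
    unfolding \<rho>_def
    by (simp add: mm_rdiff mm_rdistrib mm_ldiff matrix_add_ldistrib NN[OF that] NM MN[OF that(2)] MM
        algebra_simps)
  have rho_I: "\<rho> (1,0,0,1) = mat 1" unfolding \<rho>_def NI by simp
  have rho_inv: "invertible (\<rho> g)" if "g \<in> SL2Z" for g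
  proof -
    obtain a' b' c' d' where g: "g = (a',b',c',d')" by (cases g) auto
    note iv = inv_SL2Z[OF that[unfolded g]]
    show ?thesis unfolding invertible_def
      by (rule exI[of _ "\<rho> (d',-b',-c',a')"])
         (use rho_mult[OF that iv(1)] rho_mult[OF iv(1) that] iv rho_I g in simp)
  qed
  have rep: "representation \<rho>" unfolding representation_def using rho_inv rho_mult by simp
  have vec: "(\<chi> i. slash k v (f i) \<gamma> z) = \<rho> \<gamma> *v (\<chi> i. f i z)" if "\<gamma> \<in> SL2Z" "z \<in> HP" for \<gamma> z
  proof -
    have "(N \<gamma> *v (\<chi> i. f i z)) $ j = slash k v (f j) \<gamma> z" for j
      using S[OF that(1), of j] that(2) by (simp add: N_def matrix_vector_mult_def sum_UNIV_if)
    moreover have "(M *v (\<chi> i. f i z)) $ j = f j z" for j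
      using a[of j] that(2) by (simp add: M_def matrix_vector_mult_def sum_UNIV_if)
    ultimately show ?thesis
      by (simp add: \<rho>_def vec_eq_iff matrix_vector_mult_add_rdistrib matrix_vector_mult_diff_rdistrib)
  qed
  show ?thesis
  proof (intro exI[of _ \<rho>] conjI ballI)
    show "representation \<rho>" by (rule rep)
    show "(\<chi> i. slash k v (f i) \<gamma> z) = \<rho> \<gamma> *v (\<chi> i. f i z)" if "\<gamma> \<in> SL2Z" "z \<in> HP" for \<gamma> z
      using vec that by blast
    show "(\<lambda>z. \<chi> i. f i z) \<in> HH k \<rho> v"
      unfolding HH_def using V_holo[OF f_in] vec by simp
  qed
qed
end
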